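(* Every unary FA-presentable partial order $(X,\le)$ decomposes as a finite disjoint union of trivial partial orders, countably infinite ascending chains, countably infinite descending chains, and countably infinite anti-chains; that is, $X$ can be partitioned into finitely many subsets, each of which, with the induced order, is either a one-element partial order, or a countably infinite set $\{x_1,x_2,\dots\}$ with $x_i\le x_j$ iff $i\le j$, or one with $x_i\le x_j$ iff $i\ge j$, or a countably infinite anti-chain.
   Context: A structure $(X,\le)$ is unary FA-presentable if there exist a regular language $L\subseteq a^*$ over a one-letter alphabet and a surjection $\phi:L\to X$ such that $\{(u,v)\in L^2: u\phi=v\phi\}$ and $\{(u,v)\in L^2:u\phi\le v\phi\}$ are regular relations, i.e. the corresponding sets of words $\mathrm{conv}(u,v)$ over $\{a,\$\}^2$ (reading $u,v$ in parallel, padding the shorter with $\$$) are regular languages. *)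

theory Defs
  imports Main "HOL-Library.Disjoint_Sets"
begin

definition regular_lang :: "'s list set \<Rightarrow> bool" where
  "regular_lang L \<longleftrightarrow>
     (\<exists>(Q::nat set) q0 (\<delta>::nat \<Rightarrow> 's \<Rightarrow> nat) F.
        finite Q \<and> q0 \<in> Q \<and> (\<forall>q\<in>Q. \<forall>c. \<delta> q c \<in> Q) \<and> F \<subseteq> Q \<and>
        L = {w. foldl \<delta> q0 w \<in> F})"

text \<open>Convolution of two words: read in parallel, the shorter one padded with the
  padding symbol \$, here represented by None.\<close>

definition conv :: "'s list \<Rightarrow> 's list \<Rightarrow> ('s option \<times> 's option) list" where
  "conv u v = map (\<lambda>i. (if i < length u then Some (u ! i) else None,
                         if i < length v then Some (v ! i) else None))
                  [0..<max (length u) (length v)]"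

text \<open>Unary alphabet {a}: words are unit lists (a^n = replicate n ()).\<close>

definition unary_FA_presentable :: "'b set \<Rightarrow> 'b rel \<Rightarrow> bool" where
  "unary_FA_presentable X r \<longleftrightarrow>
     (\<exists>(L::unit list set) (\<phi>::unit list \<Rightarrow> 'b).
        regular_lang L \<and> \<phi> ` L = X \<and>
        regular_lang {conv u v | u v. u \<in> L \<and> v \<in> L \<and> \<phi> u = \<phi> v} \<and>
        regular_lang {conv u v | u v. u \<in> L \<and> v \<in> L \<and> (\<phi> u, \<phi> v) \<in> r})"

end

theory Submission
  imports Defs "HOL-Library.Infinite_Set"
begin


lemma foldl_replicate: "foldl \<delta> q (replicate k c) = ((\<lambda>q. \<delta> q c) ^^ k) q"
  by (induction k arbitrary: q) (simp_all add: funpow_Suc_right del: funpow.simps)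

lemma funpow_closed: "\<forall>q\<in>Q. F q \<in> Q \<Longrightarrow> q \<in> Q \<Longrightarrow> (F ^^ n) q \<in> Q"
  by (induction n) auto

lemma funpow_periodic:
  assumes fin: "finite Q" and cl: "\<forall>q\<in>Q. F q \<in> Q"
  shows "\<exists>T p. p > 0 \<and> (\<forall>k. \<forall>q\<in>Q. \<forall>n\<ge>T. (F ^^ (n + k*p)) q = (F ^^ n) q)"
proof -
  define h where "h n = restrict (F ^^ n) Q" for n
  have "range h \<subseteq> Q \<rightarrow>\<^sub>E Q" using funpow_closed[OF cl] by (auto simp: h_def)
  moreover have "finite (Q \<rightarrow>\<^sub>E Q)" using fin by (simp add: finite_PiE)
  ultimately have "finite (range h)" by (rule finite_subset)
  hence "\<not> inj h" using finite_imageD by blast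
  then obtain i j where ij: "i \<noteq> j" "h i = h j" unfolding inj_def by blast
  obtain a b where ab: "a < b" "h a = h b"
    using ij by (metis linorder_neqE_nat)
  have hab: "(F ^^ b) q = (F ^^ a) q" if "q \<in> Q" for q
    using ab(2) that unfolding h_def by (metis restrict_apply')
  have step: "(F ^^ (n + (b - a))) q = (F ^^ n) q" if "q \<in> Q" "n \<ge> a" for n q
  proof -
    have "n + (b - a) = (n - a) + b" using that ab by simp
    hence "(F ^^ (n + (b - a))) q = (F ^^ (n - a)) ((F ^^ b) q)" by (simp add: funpow_add)
    also have "\<dots> = (F ^^ (n - a)) ((F ^^ a) q)" using hab that by simp
    also have "\<dots> = (F ^^ n) q" using that by (metis funpow_add comp_apply le_add_diff_inverse2)
    finally show ?thesis .
  qed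
  have "(F ^^ (n + k*(b-a))) q = (F ^^ n) q" if "q \<in> Q" "n \<ge> a" for k n q
  proof (induction k)
    case (Suc k)
    have "(F ^^ (n + Suc k*(b-a))) q = (F ^^ ((n + k*(b-a)) + (b - a))) q" by (metis add.assoc add.commute mult_Suc)
    also have "\<dots> = (F ^^ (n + k*(b-a))) q" using step that by simp
    finally show ?case using Suc by simp
  qed simp
  thus ?thesis using ab by (intro exI[of _ a] exI[of _ "b - a"]) auto
qed

lemma unit_list: "(xs :: unit list) = replicate (length xs) ()"
  by (simp add: list_eq_iff_nth_eq)

lemma conv_le: "conv (replicate m ()) (replicate (m+d) ()) =
   replicate m (Some (), Some ()) @ replicate d (None, Some ())"
  unfolding conv_def by (rule nth_equalityI) (auto simp: nth_append)

lemma conv_ge: "conv (replicate (m+d) ()) (replicate m ()) =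
   replicate m (Some (), Some ()) @ replicate d (Some (), None)"
  unfolding conv_def by (rule nth_equalityI) (auto simp: nth_append)



lemma conv_counts:
  "length (takeWhile (\<lambda>x. fst x \<noteq> None) (conv (replicate m ()) (replicate n ()))) = m \<and>
   length (takeWhile (\<lambda>x. snd x \<noteq> None) (conv (replicate m ()) (replicate n ()))) = n"
proof (cases "m \<le> n")
  case True
  then obtain d where "n = m + d" using le_Suc_ex by blast
  thus ?thesis by (simp add: conv_le takeWhile_append)
next
  case False
  then obtain d where "m = n + d" by (metis le_Suc_ex nat_le_linear)
  thus ?thesis by (simp add: conv_ge takeWhile_append)
qed

lemma conv_inj: "conv (replicate m ()) (replicate n ()) = conv (replicate m' ()) (replicate n' ()) \<Longrightarrow> m = m' \<and> n = n'"
  by (metis conv_counts)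

lemma conv_mem: "conv (replicate m ()) (replicate n ()) \<in> {conv u v | u v. u \<in> L \<and> v \<in> L \<and> P u v}
   \<longleftrightarrow> replicate m () \<in> L \<and> replicate n () \<in> L \<and> P (replicate m ()) (replicate n ())"
proof
  assume "conv (replicate m ()) (replicate n ()) \<in> {conv u v | u v. u \<in> L \<and> v \<in> L \<and> P u v}"
  then obtain u v where uv: "conv (replicate m ()) (replicate n ()) = conv u v" "u \<in> L" "v \<in> L" "P u v" by blast
  have "conv (replicate m ()) (replicate n ()) = conv (replicate (length u) ()) (replicate (length v) ())"
    using uv(1) unit_list by metis
  from conv_inj[OF this] have "u = replicate m ()" "v = replicate n ()" using unit_list by metis+
  with uv show "replicate m () \<in> L \<and> replicate n () \<in> L \<and> P (replicate m ()) (replicate n ())"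
    by simp
qed blast


lemma regular_langE:
  assumes "regular_lang L"
  obtains Q q0 \<delta> F where "finite (Q::nat set)" "q0 \<in> Q" "\<forall>q\<in>Q. \<forall>c. \<delta> q c \<in> Q" "L = {w. foldl \<delta> q0 w \<in> F}"
proof -
  from assms obtain Q q0 \<delta> F where "finite (Q::nat set)" "q0 \<in> Q" "\<forall>q\<in>Q. \<forall>c. \<delta> q c \<in> Q" "L = {w. foldl \<delta> q0 w \<in> F}"
    unfolding regular_lang_def by (elim exE conjE)
  thus thesis using that by blast
qed

lemma lang_periodic:
  assumes "regular_lang (L :: unit list set)"
  shows "\<exists>T p. p > 0 \<and> (\<forall>k n. n \<ge> T \<longrightarrow> (replicate (n + k*p) () \<in> L \<longleftrightarrow> replicate n () \<in> L))"
proof -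
  obtain Q q0 \<delta> F where D: "finite (Q::nat set)" "q0 \<in> Q" "\<forall>q\<in>Q. \<forall>c. \<delta> q c \<in> Q" "L = {w. foldl \<delta> q0 w \<in> F}"
    by (rule regular_langE[OF assms])
  obtain T p where Tp: "p > 0" "\<forall>k. \<forall>q\<in>Q. \<forall>n\<ge>T. ((\<lambda>q. \<delta> q ()) ^^ (n + k*p)) q = ((\<lambda>q. \<delta> q ()) ^^ n) q"
    using funpow_periodic[OF D(1), of "\<lambda>q. \<delta> q ()"] D(3) by auto
  show ?thesis
    by (rule exI[of _ T], rule exI[of _ p]) (simp add: D(4) foldl_replicate Tp D(2))
qed

definition Rl :: "(unit option \<times> unit option) list set \<Rightarrow> nat \<Rightarrow> nat \<Rightarrow> bool" where
  "Rl A m n \<longleftrightarrow> conv (replicate m ()) (replicate n ()) \<in> A"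

lemma rel_periodic:
  assumes "regular_lang A"
  shows "\<exists>T p. p > 0 \<and>
    (\<forall>k m d. T \<le> m \<longrightarrow> Rl A (m + k*p) (m + k*p + d) = Rl A m (m+d) \<and> Rl A (m+k*p+d) (m+k*p) = Rl A (m+d) m) \<and>
    (\<forall>k m d. T \<le> d \<longrightarrow> Rl A m (m+(d+k*p)) = Rl A m (m+d) \<and> Rl A (m+(d+k*p)) m = Rl A (m+d) m)"
proof -
  obtain Q q0 \<delta> F where D: "finite (Q::nat set)" "q0 \<in> Q" "\<forall>q\<in>Q. \<forall>c. \<delta> q c \<in> Q" "A = {w. foldl \<delta> q0 w \<in> F}"
    by (rule regular_langE[OF assms])
  define Fss where "Fss = (\<lambda>q. \<delta> q (Some (), Some ()))"
  define Fns where "Fns = (\<lambda>q. \<delta> q (None, Some ()))"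
  define Fsn where "Fsn = (\<lambda>q. \<delta> q (Some (), None))"
  obtain T1 p1 where P1: "p1 > 0" "\<forall>k. \<forall>q\<in>Q. \<forall>n\<ge>T1. (Fss ^^ (n + k*p1)) q = (Fss ^^ n) q"
    using funpow_periodic[OF D(1), of Fss] D(3) unfolding Fss_def by auto
  obtain T2 p2 where P2: "p2 > 0" "\<forall>k. \<forall>q\<in>Q. \<forall>n\<ge>T2. (Fns ^^ (n + k*p2)) q = (Fns ^^ n) q"
    using funpow_periodic[OF D(1), of Fns] D(3) unfolding Fns_def by auto
  obtain T3 p3 where P3: "p3 > 0" "\<forall>k. \<forall>q\<in>Q. \<forall>n\<ge>T3. (Fsn ^^ (n + k*p3)) q = (Fsn ^^ n) q"
    using funpow_periodic[OF D(1), of Fsn] D(3) unfolding Fsn_def by auto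
  define T where "T = max T1 (max T2 T3)"
  define p where "p = p1 * p2 * p3"
  have le: "Rl A m (m+d) \<longleftrightarrow> (Fns ^^ d) ((Fss ^^ m) q0) \<in> F" for m d
    unfolding Rl_def by (simp add: conv_le D(4) foldl_replicate Fss_def Fns_def)
  have ge: "Rl A (m+d) m \<longleftrightarrow> (Fsn ^^ d) ((Fss ^^ m) q0) \<in> F" for m d
    unfolding Rl_def by (simp add: conv_ge D(4) foldl_replicate Fss_def Fsn_def)
  have cl: "(Fss ^^ m) q0 \<in> Q" for m
    using funpow_closed[of Q Fss] D(2,3) unfolding Fss_def by auto
  have a1: "(Fss ^^ (m + k*p)) q0 = (Fss ^^ m) q0" if "T \<le> m" for m k
    using P1(2)[rule_format, of q0 m "k*p2*p3"] that D(2) unfolding T_def p_def by (simp add: ac_simps)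
  have a2: "(Fns ^^ (d + k*p)) q = (Fns ^^ d) q" if "T \<le> d" "q \<in> Q" for d k q
    using P2(2)[rule_format, of q d "k*p1*p3"] that unfolding T_def p_def by (simp add: ac_simps)
  have a3: "(Fsn ^^ (d + k*p)) q = (Fsn ^^ d) q" if "T \<le> d" "q \<in> Q" for d k q
    using P3(2)[rule_format, of q d "k*p1*p2"] that unfolding T_def p_def by (simp add: ac_simps)
  have 1: "Rl A (m + k*p) (m + k*p + d) = Rl A m (m+d) \<and> Rl A (m+k*p+d) (m+k*p) = Rl A (m+d) m"
    if "T \<le> m" for k m d
    using le[of "m+k*p" d] le[of m d] ge[of "m+k*p" d] ge[of m d] a1[OF that, of k] by simp
  have 2: "Rl A m (m+(d+k*p)) = Rl A m (m+d) \<and> Rl A (m+(d+k*p)) m = Rl A (m+d) m"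
    if "T \<le> d" for k m d
    using le[of m "d+k*p"] le[of m d] ge[of m "d+k*p"] ge[of m d] a2[OF that cl, of k m] a3[OF that cl, of k m] by simp
  have "p > 0" using P1 P2 P3 unfolding p_def by simp
  with 1 2 show ?thesis by blast
qed

definition langper :: "unit list set \<Rightarrow> nat \<Rightarrow> nat \<Rightarrow> bool" where
  "langper L T p \<longleftrightarrow> (\<forall>k n. n \<ge> T \<longrightarrow> (replicate (n + k*p) () \<in> L \<longleftrightarrow> replicate n () \<in> L))"

definition relper :: "(unit option \<times> unit option) list set \<Rightarrow> nat \<Rightarrow> nat \<Rightarrow> bool" where
  "relper A T p \<longleftrightarrow>
    (\<forall>k m d. T \<le> m \<longrightarrow> Rl A (m + k*p) (m + k*p + d) = Rl A m (m+d) \<and> Rl A (m+k*p+d) (m+k*p) = Rl A (m+d) m) \<and>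
    (\<forall>k m d. T \<le> d \<longrightarrow> Rl A m (m+(d+k*p)) = Rl A m (m+d) \<and> Rl A (m+(d+k*p)) m = Rl A (m+d) m)"

lemma langper_mono: "langper L T p \<Longrightarrow> T \<le> T' \<Longrightarrow> p dvd p' \<Longrightarrow> langper L T' p'"
  unfolding langper_def
proof (intro allI impI)
  fix k n assume H: "\<forall>k n. T \<le> n \<longrightarrow> (replicate (n + k * p) () \<in> L) = (replicate n () \<in> L)"
    and "T \<le> T'" "p dvd p'" "T' \<le> n"
  then obtain c where "p' = p * c" by blast
  thus "(replicate (n + k * p') () \<in> L) = (replicate n () \<in> L)"
    using H[rule_format, of n "k*c"] \<open>T \<le> T'\<close> \<open>T' \<le> n\<close> by (simp add: ac_simps)
qed

lemma relper_mono: "relper A T p \<Longrightarrow> T \<le> T' \<Longrightarrow> p dvd p' \<Longrightarrow> relper A T' p'"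
proof -
  assume H: "relper A T p" and TT: "T \<le> T'" and pp: "p dvd p'"
  then obtain c where c: "p' = p * c" by blast
  have e: "k * p' = (k*c) * p" for k using c by simp
  show "relper A T' p'"
    using H TT unfolding relper_def e by (meson order_trans)
qed

lemma lang_periodic':
  "regular_lang (L :: unit list set) \<Longrightarrow> \<exists>T p. p > 0 \<and> langper L T p"
  using lang_periodic unfolding langper_def by blast

lemma rel_periodic':
  "regular_lang A \<Longrightarrow> \<exists>T p. p > 0 \<and> relper A T p"
  using rel_periodic unfolding relper_def by blast




theorem corollary5p11:
  fixes X :: "'b set" and r :: "'b rel"
  assumes "partial_order_on X r" and "r \<subseteq> X \<times> X"
    and "unary_FA_presentable X r"
  shows "\<exists>P. finite P \<and> partition_on X P \<and>
           (\<forall>S\<in>P. card S = 1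
              \<or> (\<exists>f::nat \<Rightarrow> 'b. bij_betw f UNIV S \<and> (\<forall>i j. (f i, f j) \<in> r \<longleftrightarrow> i \<le> j))
              \<or> (\<exists>f::nat \<Rightarrow> 'b. bij_betw f UNIV S \<and> (\<forall>i j. (f i, f j) \<in> r \<longleftrightarrow> j \<le> i))
              \<or> (\<exists>f::nat \<Rightarrow> 'b. bij_betw f UNIV S \<and> (\<forall>i j. (f i, f j) \<in> r \<longleftrightarrow> i = j)))"
proof -
  obtain L :: "unit list set" and \<phi> :: "unit list \<Rightarrow> 'b" where
    Lreg: "regular_lang L" and img: "\<phi> ` L = X" and
    Ereg: "regular_lang {conv u v | u v. u \<in> L \<and> v \<in> L \<and> \<phi> u = \<phi> v}" and
    Rreg: "regular_lang {conv u v | u v. u \<in> L \<and> v \<in> L \<and> (\<phi> u, \<phi> v) \<in> r}"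
    using assms(3) unfolding unary_FA_presentable_def by blast
  define AE where "AE = {conv u v | u v. u \<in> L \<and> v \<in> L \<and> \<phi> u = \<phi> v}"
  define AR where "AR = {conv u v | u v. u \<in> L \<and> v \<in> L \<and> (\<phi> u, \<phi> v) \<in> r}"
  define g where "g n = \<phi> (replicate n ())" for n
  define Ls where "Ls = {n. replicate n () \<in> L}"
  define E where "E = Rl AE"
  define R where "R = Rl AR"
  have Edef: "E m n \<longleftrightarrow> m \<in> Ls \<and> n \<in> Ls \<and> g m = g n" for m n
    unfolding E_def Rl_def AE_def conv_mem Ls_def g_def by simp
  have Rdef: "R m n \<longleftrightarrow> m \<in> Ls \<and> n \<in> Ls \<and> (g m, g n) \<in> r" for m n
    unfolding R_def Rl_def AR_def conv_mem Ls_def g_def by simp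
  obtain T1 p1 where P1: "p1 > 0" "langper L T1 p1" using lang_periodic'[OF Lreg] by blast
  obtain T2 p2 where P2: "p2 > 0" "relper AE T2 p2" using rel_periodic'[OF Ereg] AE_def by blast
  obtain T3 p3 where P3: "p3 > 0" "relper AR T3 p3" using rel_periodic'[OF Rreg] AR_def by blast
  define T where "T = max 1 (max T1 (max T2 T3))"
  define q where "q = p1 * p2 * p3 * (T + 1)"
  have Ppos: "p1 * p2 * p3 \<ge> 1" using P1(1) P2(1) P3(1) by simp
  have qge: "T + 1 \<le> q" unfolding q_def using mult_le_mono1[OF Ppos, of "T+1"]
    by simp
  hence qpos: "q > 0" and qT: "T \<le> q" by auto
  have T1: "1 \<le> T" unfolding T_def by simp
  have LP: "langper L T q"
    by (rule langper_mono[OF P1(2)]) (auto simp: T_def q_def)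
  have EP: "relper AE T q"
    by (rule relper_mono[OF P2(2)]) (auto simp: T_def q_def)
  have RP: "relper AR T q"
    by (rule relper_mono[OF P3(2)]) (auto simp: T_def q_def)
  have HL: "n + k*q \<in> Ls \<longleftrightarrow> n \<in> Ls" if "T \<le> n" for n k
    using LP that unfolding langper_def Ls_def by auto
  have HE1: "E (m + k*q) (m + k*q + d) = E m (m+d)" if "T \<le> m" for k m d
    using EP that unfolding relper_def E_def by blast
  have HE2: "E m (m+(d+k*q)) = E m (m+d)" if "T \<le> d" for k m d
    using EP that unfolding relper_def E_def by blast
  have HR1: "R (m + k*q) (m + k*q + d) = R m (m+d) \<and> R (m+k*q+d) (m+k*q) = R (m+d) m"
    if "T \<le> m" for k m d
    using RP that unfolding relper_def R_def by blast
  have HR2: "R m (m+(d+k*q)) = R m (m+d) \<and> R (m+(d+k*q)) m = R (m+d) m" if "T \<le> d" for k m d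
    using RP that unfolding relper_def R_def by blast

  define M where "M = {n \<in> Ls. \<forall>m<n. m \<in> Ls \<longrightarrow> g m \<noteq> g n}"
  have Miff: "n \<in> M \<longleftrightarrow> n \<in> Ls \<and> \<not> (\<exists>m<n. E m n)" for n
    unfolding M_def Edef by auto
  have injM: "inj_on g M"
  proof (rule inj_onI)
    fix m n assume "m \<in> M" "n \<in> M" "g m = g n"
    hence m: "m \<in> Ls" "\<forall>k<m. k \<in> Ls \<longrightarrow> g k \<noteq> g m" and n: "n \<in> Ls" "\<forall>k<n. k \<in> Ls \<longrightarrow> g k \<noteq> g n"
      unfolding M_def by auto
    show "m = n"
    proof (rule ccontr)
      assume "m \<noteq> n"
      then consider "m < n" | "n < m" by linarith
      thus False using m n \<open>g m = g n\<close> by cases auto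
    qed
  qed
  have imgM: "g ` M = X"
  proof
    show "g ` M \<subseteq> X"
    proof
      fix x assume "x \<in> g ` M"
      then obtain n where "n \<in> M" "x = g n" by blast
      hence "replicate n () \<in> L" by (simp add: M_def Ls_def)
      thus "x \<in> X" using img \<open>x = g n\<close> unfolding g_def by blast
    qed
  next
    show "X \<subseteq> g ` M"
    proof
      fix x assume "x \<in> X"
      then obtain u where u: "u \<in> L" "x = \<phi> u" using img by blast
      have u': "replicate (length u) () = u" by (rule unit_list[symmetric])
      have ex: "length u \<in> Ls \<and> g (length u) = x"
        unfolding Ls_def g_def mem_Collect_eq u' using u by simp
      define n where "n = (LEAST n. n \<in> Ls \<and> g n = x)"
      have n: "n \<in> Ls \<and> g n = x" unfolding n_def by (rule LeastI[of "\<lambda>n. n \<in> Ls \<and> g n = x", OF ex])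
      have "\<forall>m<n. m \<in> Ls \<longrightarrow> g m \<noteq> g n"
      proof (intro allI impI)
        fix m assume "m < n" "m \<in> Ls"
        from not_less_Least[OF \<open>m < n\<close>[unfolded n_def]] \<open>m \<in> Ls\<close>
        have "g m \<noteq> x" by blast
        thus "g m \<noteq> g n" using n by simp
      qed
      hence "n \<in> M" unfolding M_def using n by blast
      thus "x \<in> g ` M" using n by blast
    qed
  qed
  define N where "N = 2*T + q"
  have Mstep: "n + q \<in> M \<longleftrightarrow> n \<in> M" if nN: "N \<le> n" for n
  proof -
    have Ln: "n + q \<in> Ls \<longleftrightarrow> n \<in> Ls" using HL[of n 1] nN unfolding N_def by simp
    have A: "\<exists>m'<n+q. E m' (n+q)" if "m < n" "E m n" for m
    proof (cases "T \<le> n - m")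
      case True
      have "E m (m + ((n - m) + 1*q)) = E m (m + (n-m))" by (rule HE2[OF True])
      thus ?thesis using that by (intro exI[of _ m]) auto
    next
      case False
      hence "T \<le> m" using nN unfolding N_def by simp
      from HE1[OF this, of 1 "n - m"] have "E (m+q) (m + q + (n - m)) = E m (m + (n-m))" by simp
      thus ?thesis using that by (intro exI[of _ "m+q"]) (auto simp: add.commute)
    qed
    have B: "\<exists>m'<n. E m' n" if "m < n + q" "E m (n+q)" for m
    proof (cases "T + q \<le> n + q - m")
      case True
      define d where "d = n + q - m - q"
      have dT: "T \<le> d" using True unfolding d_def by simp
      have "E m (m + (d + 1*q)) = E m (m + d)" by (rule HE2[OF dT])
      moreover have "m + (d + 1*q) = n + q" "m + d = n" using True that unfolding d_def by auto
      ultimately show ?thesis using that dT T1 by (intro exI[of _ m]) (auto simp: add.assoc)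
    next
      case False
      define m' where "m' = m - q"
      have m'T: "T \<le> m'" using False nN unfolding m'_def N_def by simp
      from HE1[OF m'T, of 1 "n - m'"]
      have "E (m' + q) (m' + q + (n - m')) = E m' (m' + (n - m'))" by simp
      moreover have "m' + q = m" "m' + q + (n - m') = n + q" "m' + (n - m') = n" "m' < n"
        using False nN that unfolding m'_def N_def by auto
      ultimately show ?thesis using that by (intro exI[of _ m']) auto
    qed
    show ?thesis unfolding Miff using A B Ln by blast
  qed
  have Mper: "n + k*q \<in> M \<longleftrightarrow> n \<in> M" if "N \<le> n" for n k
  proof (induction k)
    case (Suc k)
    have "n + Suc k * q = (n + k*q) + q" by simp
    thus ?case using Mstep[of "n + k*q"] Suc that by (simp add: ac_simps)
  qed simp
  have NT: "T \<le> N" unfolding N_def by simp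
  have refl: "(x, x) \<in> r" if "x \<in> X" for x
    using assms(1) that unfolding partial_order_on_def preorder_on_def by (meson refl_onD)
  have antis: "x = y" if "(x, y) \<in> r" "(y, x) \<in> r" for x y
    using assms(1) that unfolding partial_order_on_def by (meson antisymD)
  define idx where "idx n = (if n < N then Inl n else Inr (n mod q))" for n
  define I where "I i = {n \<in> M. idx n = i}" for i
  define P where "P = (\<lambda>i. g ` I i) ` (idx ` M)"
  have finP: "finite P"
  proof -
    have "idx ` M \<subseteq> Inl ` {..<N} \<union> Inr ` {..<q}"
      using qpos by (auto simp: idx_def)
    hence "finite (idx ` M)" by (rule finite_subset) simp
    thus ?thesis unfolding P_def by simp
  qed
  have UP: "\<Union>P = X"
  proof -
    have "\<Union>P = g ` M" unfolding P_def I_def by auto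
    thus ?thesis using imgM by simp
  qed
  have partP: "partition_on X P"
  proof (rule partition_onI)
    show "\<Union>P = X" by (rule UP)
  next
    fix p p' assume pp: "p \<in> P" "p' \<in> P" "p \<noteq> p'"
    then obtain a a' where a: "a \<in> M" "p = g ` I (idx a)" and a': "a' \<in> M" "p' = g ` I (idx a')"
      unfolding P_def by blast
    show "disjnt p p'"
    proof (rule ccontr)
      assume "\<not> disjnt p p'"
      then obtain x where "x \<in> p" "x \<in> p'" unfolding disjnt_def by blast
      then obtain b b' where b: "b \<in> I (idx a)" "x = g b" and b': "b' \<in> I (idx a')" "x = g b'"
        using a a' by blast
      have "b \<in> M" "b' \<in> M" using b b' unfolding I_def by auto
      hence "b = b'" using injM b b' by (metis inj_onD)
      hence "idx a = idx a'" using b b' unfolding I_def by auto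
      thus False using pp a a' by simp
    qed
  next
    show "{} \<notin> P" unfolding P_def I_def by auto
  qed
  have pieces: "card S = 1
              \<or> (\<exists>f::nat \<Rightarrow> 'b. bij_betw f UNIV S \<and> (\<forall>i j. (f i, f j) \<in> r \<longleftrightarrow> i \<le> j))
              \<or> (\<exists>f::nat \<Rightarrow> 'b. bij_betw f UNIV S \<and> (\<forall>i j. (f i, f j) \<in> r \<longleftrightarrow> j \<le> i))
              \<or> (\<exists>f::nat \<Rightarrow> 'b. bij_betw f UNIV S \<and> (\<forall>i j. (f i, f j) \<in> r \<longleftrightarrow> i = j))"
    if "S \<in> P" for S
  proof -
    obtain a where a: "a \<in> M" "S = g ` I (idx a)" using \<open>S \<in> P\<close> unfolding P_def by blast
    show ?thesis
    proof (cases "a < N")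
      case True
      have "I (idx a) = {a}" using True a(1) unfolding I_def idx_def by (auto split: if_splits)
      hence "card S = 1" using a by simp
      thus ?thesis by blast
    next
      case False
      define J where "J = I (idx a)"
      have Jeq: "J = {n \<in> M. N \<le> n \<and> n mod q = a mod q}"
        using False unfolding J_def I_def idx_def by (auto split: if_splits)
      have SJ: "S = g ` J" using a unfolding J_def by simp
      have Jcl: "n + k*q \<in> J" if "n \<in> J" for n k
        using that Mper[of n k] unfolding Jeq by auto
      have aJ: "a \<in> J" using a(1) False unfolding Jeq by simp
      have infJ: "infinite J"
        unfolding infinite_nat_iff_unbounded_le
      proof
        fix m
        have "a + m*q \<in> J" by (rule Jcl[OF aJ])
        moreover have "m * 1 \<le> m * q" using qpos by (intro mult_le_mono2) simp
        hence "m \<le> a + m*q" by linarith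
        ultimately show "\<exists>n\<ge>m. n \<in> J" by blast
      qed
      define e where "e = enumerate J"
      have bije: "bij_betw e UNIV J" unfolding e_def by (rule bij_enumerate[OF infJ])
      have eJ: "e i \<in> J" for i unfolding e_def by (rule enumerate_in_set[OF infJ])
      have emono: "e i < e j" if "i < j" for i j unfolding e_def using enumerate_mono[OF that infJ] .
      define m0 where "m0 = e 0"
      have m0J: "m0 \<in> J" unfolding m0_def by (rule eJ)
      have m0le: "m0 \<le> n" if "n \<in> J" for n
        unfolding m0_def e_def enumerate_0 using that by (rule Least_le)
      have m0T: "T \<le> m0" using m0J NT unfolding Jeq by auto
      have key: "R m n = R m0 (m0 + q) \<and> R n m = R (m0 + q) m0" if mJ: "m \<in> J" and nJ: "n \<in> J" and mn: "m < n" for m n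
      proof -
        have mm: "m mod q = m0 mod q" "n mod q = m mod q" using that m0J unfolding Jeq by auto
        obtain s1 where s1: "m = m0 + q*s1" using mm(1) m0le[OF mJ] by (metis mod_eq_nat2E)
        obtain s2 where s2: "n = m + q*s2" using mm(2) less_imp_le[OF mn] by (metis mod_eq_nat2E)
        then obtain s3 where s3: "s2 = Suc s3" using mn by (cases s2) auto
        have eqs: "m = m0 + s1*q" "n = m0 + s1*q + (q + s3*q)" using s1 s2 s3 by (simp_all add: algebra_simps)
        have h1: "R m n = R m0 (m0 + (q + s3*q)) \<and> R n m = R (m0 + (q + s3*q)) m0"
          unfolding eqs using HR1[OF m0T, of s1 "q + s3*q"] by simp
        have h2: "R m0 (m0 + (q + s3*q)) = R m0 (m0 + q) \<and> R (m0 + (q + s3*q)) m0 = R (m0 + q) m0"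
          using HR2[OF qT, of m0 s3] by simp
        show ?thesis using h1 h2 by simp
      qed
      define \<alpha> where "\<alpha> = R m0 (m0 + q)"
      define \<beta> where "\<beta> = R (m0 + q) m0"
      define f where "f = g \<circ> e"
      have bijg: "bij_betw g J S"
        unfolding SJ by (rule bij_betw_imageI[OF inj_on_subset[OF injM]]) (auto simp: Jeq)
      have bijf: "bij_betw f UNIV S" unfolding f_def by (rule bij_betw_trans[OF bije bijg])
      have eM: "e i \<in> M" for i using eJ[of i] unfolding Jeq by auto
      have eLs: "e i \<in> Ls" for i using eM[of i] unfolding M_def by auto
      have rR: "(f i, f j) \<in> r \<longleftrightarrow> R (e i) (e j)" for i j
        unfolding f_def Rdef using eLs by simp
      have fX: "f i \<in> X" for i unfolding f_def using eM imgM by auto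
      have rel: "(f i, f j) \<in> r \<longleftrightarrow> (i = j \<or> (i < j \<and> \<alpha>) \<or> (j < i \<and> \<beta>))" for i j
      proof (cases i j rule: linorder_cases)
        case less
        thus ?thesis using key[OF eJ eJ emono[OF less]] rR unfolding \<alpha>_def by simp
      next
        case equal
        thus ?thesis using refl[OF fX] by simp
      next
        case greater
        thus ?thesis using key[OF eJ eJ emono[OF greater]] rR unfolding \<beta>_def by simp
      qed
      have injf: "inj f" using bijf by (rule bij_betw_imp_inj_on)
      have nab: "\<not> (\<alpha> \<and> \<beta>)"
      proof
        assume "\<alpha> \<and> \<beta>"
        hence "(f 0, f 1) \<in> r" "(f 1, f 0) \<in> r" using rel by auto
        hence "f 0 = f 1" by (rule antis)
        thus False using injf by (metis inj_eq zero_neq_one)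
      qed
      show ?thesis
      proof (cases \<alpha>)
        case True
        hence "\<forall>i j. (f i, f j) \<in> r \<longleftrightarrow> i \<le> j" using rel nab by auto
        thus ?thesis using bijf by blast
      next
        case False
        show ?thesis
        proof (cases \<beta>)
          case True
          hence "\<forall>i j. (f i, f j) \<in> r \<longleftrightarrow> j \<le> i" using rel False by auto
          thus ?thesis using bijf by blast
        next
          case nb: False
          hence "\<forall>i j. (f i, f j) \<in> r \<longleftrightarrow> i = j" using rel False by auto
          thus ?thesis using bijf by blast
        qed
      qed
    qed
  qed
  show ?thesis using finP partP pieces by blast
qed

end
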